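(* Let $(\Omega,\mathcal{A},\pi)$ and $(\Omega',\mathcal{A}',\pi')$ be probability spaces, let $W:\Omega\times\Omega'\to\mathcal{Z}$ be weak-* measurable with respect to $\mathcal{A}\times\mathcal{A}'$ with $\|W\|\in L^2(\pi\times\pi')$, and let $\mathcal{A}_0\subset\mathcal{A}$ be a sub-$\sigma$-algebra. If $W(\cdot,y)$ is weak-* measurable with respect to $\mathcal{A}_0$ for almost all $y\in\Omega'$, then $W$ is almost weak-* measurable with respect to $\mathcal{A}_0\times\mathcal{A}'$.
   Context: $\Phi$ is a separable real Banach space, $\mathcal{Z}=\Phi^*$, $\langle\varphi,z\rangle=z(\varphi)$. A function is weak-* measurable w.r.t. a $\sigma$-algebra $\mathcal{B}$ if every $\langle\varphi,\cdot\rangle$, $\varphi\in\Phi$, composed with it is $\mathcal{B}$-measurable. For a sub-$\sigma$-algebra $\mathcal{B}'$ of $\mathcal{A}\times\mathcal{A}'$, the conditional expectation $E(W\mid\mathcal{B}')$ is the ($\pi\times\pi'$-a.e. unique) $\mathcal{B}'$-weak-* measurable function $W'$ with $\int_B\langle\varphi,W'\rangle=\int_B\langle\varphi,W\rangle$ for all $B\in\mathcal{B}'$, $\varphi\in\Phi$; $W$ is almost weak-* measurable with respect to $\mathcal{B}'$ if $W=E(W\mid\mathcal{B}')$ almost everywhere. *)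

theory Defs
  imports "HOL-Probability.Probability"
begin

text \<open>Z = dual of the separable Banach space 'phi, represented as bounded linear
functionals of type blinfun (with the operator norm). The pairing
<phi, z> is z(phi) = blinfun_apply z phi.\<close>

definition weak_star_measurable ::
  "'x measure \<Rightarrow> ('x \<Rightarrow> ('phi::real_normed_vector \<Rightarrow>\<^sub>L real)) \<Rightarrow> bool" where
  "weak_star_measurable N W \<longleftrightarrow>
     (\<forall>\<phi>. (\<lambda>x. blinfun_apply (W x) \<phi>) \<in> borel_measurable N)"

definition is_weak_star_cond_exp ::
  "'x measure \<Rightarrow> 'x measure \<Rightarrow> ('x \<Rightarrow> ('phi::real_normed_vector \<Rightarrow>\<^sub>L real))
     \<Rightarrow> ('x \<Rightarrow> ('phi \<Rightarrow>\<^sub>L real)) \<Rightarrow> bool" where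
  "is_weak_star_cond_exp N F W W' \<longleftrightarrow>
     weak_star_measurable F W' \<and>
     (\<forall>B\<in>sets F. \<forall>\<phi>.
        set_integrable N B (\<lambda>x. blinfun_apply (W' x) \<phi>) \<and>
        set_integrable N B (\<lambda>x. blinfun_apply (W x) \<phi>) \<and>
        (LINT x:B|N. blinfun_apply (W' x) \<phi>) = (LINT x:B|N. blinfun_apply (W x) \<phi>))"

definition almost_weak_star_measurable ::
  "'x measure \<Rightarrow> 'x measure \<Rightarrow> ('x \<Rightarrow> ('phi::real_normed_vector \<Rightarrow>\<^sub>L real)) \<Rightarrow> bool" where
  "almost_weak_star_measurable N F W \<longleftrightarrow>
     (\<exists>W'. is_weak_star_cond_exp N F W W' \<and> (AE x in N. W x = W' x))"

end

theory Submission imports Defs begin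
lemma subalg_pair:
  assumes "subalgebra M M0"
  shows "subalgebra (M \<Otimes>\<^sub>M M') (M0 \<Otimes>\<^sub>M M')"
proof -
  have sp: "space M0 = space M" and ss: "sets M0 \<subseteq> sets M" using assms unfolding subalgebra_def by auto
  show ?thesis unfolding subalgebra_def
  proof
    show "space (M0 \<Otimes>\<^sub>M M') = space (M \<Otimes>\<^sub>M M')" by (simp add: space_pair_measure sp)
    show "sets (M0 \<Otimes>\<^sub>M M') \<subseteq> sets (M \<Otimes>\<^sub>M M')"
      unfolding sets_pair_measure sp
      by (rule sigma_sets_subseteq) (use ss in blast)
  qed
qed

lemma core_rect:
  fixes f :: "'a \<times> 'b \<Rightarrow> real"
  assumes PM: "prob_space M" and PM': "prob_space M'" and sub: "subalgebra M M0"
    and int: "integrable (M \<Otimes>\<^sub>M M') f"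
    and sec: "AE y in M'. (\<lambda>x. f (x,y)) \<in> borel_measurable M0"
    and A: "A \<in> sets M" and B: "B \<in> sets M'"
  shows "(LINT z:A\<times>B|(M \<Otimes>\<^sub>M M'). f z - real_cond_exp (M \<Otimes>\<^sub>M M') (M0 \<Otimes>\<^sub>M M') f z) = 0"
proof -
  interpret M: prob_space M by fact
  interpret M': prob_space M' by fact
  interpret P: pair_prob_space M M' by unfold_locales
  interpret S: finite_measure_subalgebra "M \<Otimes>\<^sub>M M'" "M0 \<Otimes>\<^sub>M M'"
    by unfold_locales (rule subalg_pair[OF sub])
  interpret Ms: finite_measure_subalgebra M M0
    by unfold_locales (rule sub)
  define g where "g = real_cond_exp (M \<Otimes>\<^sub>M M') (M0 \<Otimes>\<^sub>M M') f"
  define h where "h z = f z - g z" for z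
  have gF[measurable]: "g \<in> borel_measurable (M0 \<Otimes>\<^sub>M M')" unfolding g_def by simp
  have gN[measurable]: "g \<in> borel_measurable (M \<Otimes>\<^sub>M M')"
    by (rule measurable_from_subalg[OF subalg_pair[OF sub] gF])
  have fN[measurable]: "f \<in> borel_measurable (M \<Otimes>\<^sub>M M')" using int by simp
  have hN[measurable]: "h \<in> borel_measurable (M \<Otimes>\<^sub>M M')" unfolding h_def by simp
  have intg: "integrable (M \<Otimes>\<^sub>M M') g" unfolding g_def using int by (rule S.real_cond_exp_int)
  have inth: "integrable (M \<Otimes>\<^sub>M M') h" unfolding h_def using int intg by simp
  have sp: "space M0 = space M" using sub unfolding subalgebra_def by auto
  have hsec: "AE y in M'. integrable M (\<lambda>x. h (x,y)) \<and> (\<lambda>x. h (x,y)) \<in> borel_measurable M0"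
  proof -
    have "AE y in M'. integrable M (\<lambda>x. h (x,y))"
      using P.AE_integrable_snd[of "\<lambda>x y. h (x,y)"] inth by simp
    moreover have "AE y in M'. (\<lambda>x. g (x,y)) \<in> borel_measurable M0"
      using AE_space by eventually_elim (use measurable_Pair1[OF gF] in \<open>simp add: space_pair_measure\<close>)
    ultimately show ?thesis using sec
      by eventually_elim (auto simp: h_def)
  qed
  define r where "r = real_cond_exp M M0 (indicator A)"
  define c where "c x = max 0 (min 1 (r x))" for x
  have rM0[measurable]: "r \<in> borel_measurable M0" unfolding r_def by simp
  have cM0[measurable]: "c \<in> borel_measurable M0" unfolding c_def by simp
  have cM[measurable]: "c \<in> borel_measurable M" by (rule measurable_from_subalg[OF sub cM0])
  have rM[measurable]: "r \<in> borel_measurable M" by (rule measurable_from_subalg[OF sub rM0])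
  have intA: "integrable M (indicator A :: 'a \<Rightarrow> real)" using A by (simp add: M.emeasure_eq_measure)
  have cAE: "AE x in M. c x = r x"
  proof -
    have "AE x in M. r x \<ge> 0" unfolding r_def by (rule Ms.real_cond_exp_pos) (use A in auto)
    moreover have "AE x in M. r x \<le> 1" unfolding r_def
      by (rule Ms.real_cond_exp_le_c[OF intA]) (auto simp: indicator_def)
    ultimately show ?thesis by eventually_elim (auto simp: c_def)
  qed
  have sec_eq: "AE y in M'. (\<integral>x. indicator A x * h (x,y) \<partial>M) = (\<integral>x. c x * h (x,y) \<partial>M)"
    using hsec
  proof eventually_elim
    case (elim y)
    then have i: "integrable M (\<lambda>x. h (x,y))" and m[measurable]: "(\<lambda>x. h (x,y)) \<in> borel_measurable M0" by auto
    have "(\<integral>x. indicator A x * h (x,y) \<partial>M) = (\<integral>x. h (x,y) * indicator A x \<partial>M)"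
      by (simp add: mult.commute)
    also have "\<dots> = (\<integral>x. h (x,y) * r x \<partial>M)"
      unfolding r_def
      by (rule Ms.real_cond_exp_intg(2)[symmetric]) (use i A in \<open>auto intro: integrable_real_mult_indicator\<close>)
    also have "\<dots> = (\<integral>x. c x * h (x,y) \<partial>M)"
    proof (rule integral_cong_AE)
      show "(\<lambda>x. h (x, y) * r x) \<in> borel_measurable M"
        using measurable_from_subalg[OF sub m] by measurable
      show "(\<lambda>x. c x * h (x, y)) \<in> borel_measurable M"
        using measurable_from_subalg[OF sub m] by measurable
      show "AE x in M. h (x, y) * r x = c x * h (x, y)" using cAE by eventually_elim simp
    qed
    finally show ?case .
  qed
  define k where "k z = c (fst z) * indicator B (snd z)" for z
  have kF[measurable]: "k \<in> borel_measurable (M0 \<Otimes>\<^sub>M M')" unfolding k_def using B by measurable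
  have kN[measurable]: "k \<in> borel_measurable (M \<Otimes>\<^sub>M M')" unfolding k_def using B by measurable
  have kb: "\<bar>k z\<bar> \<le> 1" for z unfolding k_def c_def by (auto simp: indicator_def)
  have intkh: "integrable (M \<Otimes>\<^sub>M M') (\<lambda>z. k z * h z)"
    by (rule Bochner_Integration.integrable_bound[OF inth]) (use kb in \<open>auto simp: abs_mult intro!: mult_left_le_one_le\<close>)
  have intkf: "integrable (M \<Otimes>\<^sub>M M') (\<lambda>z. k z * f z)"
    by (rule Bochner_Integration.integrable_bound[OF int]) (use kb in \<open>auto simp: abs_mult intro!: mult_left_le_one_le\<close>)
  have intABh: "integrable (M \<Otimes>\<^sub>M M') (\<lambda>z. indicator (A \<times> B) z * h z)"
    using integrable_mult_indicator[of "A \<times> B" "M \<Otimes>\<^sub>M M'" h] A B inth by simp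
  have "(LINT z:A\<times>B|(M \<Otimes>\<^sub>M M'). h z) = (\<integral>z. indicator (A \<times> B) z * h z \<partial>(M \<Otimes>\<^sub>M M'))"
    unfolding set_lebesgue_integral_def by simp
  also have "\<dots> = (\<integral>y. \<integral>x. indicator (A \<times> B) (x,y) * h (x,y) \<partial>M \<partial>M')"
    using P.integral_snd[of "\<lambda>x y. indicator (A \<times> B) (x,y) * h (x,y)"] intABh by (simp add: case_prod_beta')
  also have "\<dots> = (\<integral>y. indicator B y * (\<integral>x. indicator A x * h (x,y) \<partial>M) \<partial>M')"
  proof (intro Bochner_Integration.integral_cong refl)
    fix y
    have "(\<lambda>x. indicator (A \<times> B) (x,y) * h (x,y)) = (\<lambda>x. indicator B y * (indicator A x * h (x,y)))"
      by (auto simp: indicator_times)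
    then show "(\<integral>x. indicator (A \<times> B) (x,y) * h (x,y) \<partial>M) = indicator B y * (\<integral>x. indicator A x * h (x,y) \<partial>M)"
      by simp
  qed
  also have "\<dots> = (\<integral>y. indicator B y * (\<integral>x. c x * h (x,y) \<partial>M) \<partial>M')"
  proof (rule integral_cong_AE)
    show "(\<lambda>y. indicator B y * (\<integral>x. indicator A x * h (x,y) \<partial>M)) \<in> borel_measurable M'"
      using A B by measurable
    show "(\<lambda>y. indicator B y * (\<integral>x. c x * h (x,y) \<partial>M)) \<in> borel_measurable M'"
      using A B by measurable
    show "AE y in M'. indicator B y * (\<integral>x. indicator A x * h (x,y) \<partial>M) = indicator B y * (\<integral>x. c x * h (x,y) \<partial>M)"
      using sec_eq by eventually_elim simp
  qed
  also have "\<dots> = (\<integral>y. \<integral>x. k (x,y) * h (x,y) \<partial>M \<partial>M')"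
  proof (intro Bochner_Integration.integral_cong refl)
    fix y
    have "(\<lambda>x. k (x,y) * h (x,y)) = (\<lambda>x. indicator B y * (c x * h (x,y)))"
      by (auto simp: k_def)
    then show "indicator B y * (\<integral>x. c x * h (x,y) \<partial>M) = (\<integral>x. k (x,y) * h (x,y) \<partial>M)"
      by simp
  qed
  also have "\<dots> = (\<integral>z. k z * h z \<partial>(M \<Otimes>\<^sub>M M'))"
    using P.integral_snd[of "\<lambda>x y. k (x,y) * h (x,y)"] intkh by (simp add: case_prod_beta')
  also have "\<dots> = (\<integral>z. k z * f z \<partial>(M \<Otimes>\<^sub>M M')) - (\<integral>z. k z * g z \<partial>(M \<Otimes>\<^sub>M M'))"
  proof -
    have "integrable (M \<Otimes>\<^sub>M M') (\<lambda>z. k z * g z)"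
      unfolding g_def by (rule S.real_cond_exp_intg(1)[OF intkf kF fN])
    then show ?thesis unfolding h_def using intkf by (simp add: right_diff_distrib)
  qed
  also have "\<dots> = 0"
    unfolding g_def using S.real_cond_exp_intg(2)[OF intkf kF fN] by simp
  finally show ?thesis unfolding h_def g_def .
qed

lemma core:
  fixes f :: "'a \<times> 'b \<Rightarrow> real"
  assumes PM: "prob_space M" and PM': "prob_space M'" and sub: "subalgebra M M0"
    and int: "integrable (M \<Otimes>\<^sub>M M') f"
    and sec: "AE y in M'. (\<lambda>x. f (x,y)) \<in> borel_measurable M0"
  shows "AE z in M \<Otimes>\<^sub>M M'. f z = real_cond_exp (M \<Otimes>\<^sub>M M') (M0 \<Otimes>\<^sub>M M') f z"
proof -
  interpret M: prob_space M by fact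
  interpret M': prob_space M' by fact
  interpret P: pair_prob_space M M' by unfold_locales
  interpret S: finite_measure_subalgebra "M \<Otimes>\<^sub>M M'" "M0 \<Otimes>\<^sub>M M'"
    by unfold_locales (rule subalg_pair[OF sub])
  define N where "N = M \<Otimes>\<^sub>M M'"
  define g where "g = real_cond_exp (M \<Otimes>\<^sub>M M') (M0 \<Otimes>\<^sub>M M') f"
  define h where "h z = f z - g z" for z
  have gF[measurable]: "g \<in> borel_measurable (M0 \<Otimes>\<^sub>M M')" unfolding g_def by simp
  have gN[measurable]: "g \<in> borel_measurable (M \<Otimes>\<^sub>M M')"
    by (rule measurable_from_subalg[OF subalg_pair[OF sub] gF])
  have intg: "integrable (M \<Otimes>\<^sub>M M') g" unfolding g_def using int by (rule S.real_cond_exp_int)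
  have inth: "integrable (M \<Otimes>\<^sub>M M') h" unfolding h_def using int intg by simp
  have si: "set_integrable N E \<phi>" if "E \<in> sets N" "integrable N \<phi>" for E and \<phi> :: "'a \<times> 'b \<Rightarrow> real"
    unfolding set_integrable_def using integrable_mult_indicator[OF that] .
  have toth: "(\<integral>z. h z \<partial>N) = 0"
  proof -
    have "(\<integral>z. h z \<partial>N) = (\<integral>z. f z \<partial>N) - (\<integral>z. g z \<partial>N)"
      unfolding h_def N_def using int intg by (rule Bochner_Integration.integral_diff)
    then show ?thesis using S.real_cond_exp_int(2)[OF int] by (simp add: N_def g_def)
  qed
  have all: "(LINT z:E|N. h z) = 0" if E: "E \<in> sets N" for E
  proof -
    have E': "E \<in> sigma_sets (space M \<times> space M') {a \<times> b | a b. a \<in> sets M \<and> b \<in> sets M'}"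
      using E by (simp add: N_def sets_pair_measure)
    show ?thesis
    proof (rule sigma_sets_induct_disjoint[OF Int_stable_pair_measure_generator pair_measure_closed E',
          where P="\<lambda>E. (LINT z:E|N. h z) = 0"])
      fix A assume "A \<in> {a \<times> b | a b. a \<in> sets M \<and> b \<in> sets M'}"
      then obtain a b where A: "A = a \<times> b" "a \<in> sets M" "b \<in> sets M'" by auto
      show "(LINT z:A|N. h z) = 0"
        unfolding A N_def h_def g_def by (rule core_rect[OF PM PM' sub int sec A(2,3)])
    next
      show "(LINT z:{}|N. h z) = 0" by (simp add: set_lebesgue_integral_def)
    next
      fix A assume A: "A \<in> sigma_sets (space M \<times> space M') {a \<times> b | a b. a \<in> sets M \<and> b \<in> sets M'}"
        and IH: "(LINT z:A|N. h z) = 0"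
      have AN: "A \<in> sets N" using A by (simp add: N_def sets_pair_measure)
      have sN: "space N = space M \<times> space M'" by (simp add: N_def space_pair_measure)
      have CN: "space N - A \<in> sets N" using AN by auto
      have "(LINT z:space N|N. h z) = (LINT z:A \<union> (space N - A)|N. h z)"
        using sets.sets_into_space[OF AN] by (simp add: Un_absorb1)
      also have "\<dots> = (LINT z:A|N. h z) + (LINT z:space N - A|N. h z)"
        by (rule set_integral_Un) (use si[OF AN] si[OF CN] inth in \<open>auto simp: N_def\<close>)
      finally show "(LINT z:space M \<times> space M' - A|N. h z) = 0"
        using IH toth set_integral_space[of N h] inth sN by (simp add: N_def)
    next
      fix A :: "nat \<Rightarrow> ('a \<times> 'b) set"
      assume disj: "disjoint_family A"
        and rA: "range A \<subseteq> sigma_sets (space M \<times> space M') {a \<times> b | a b. a \<in> sets M \<and> b \<in> sets M'}"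
        and IH: "\<And>i. (LINT z:A i|N. h z) = 0"
      have AN: "A i \<in> sets N" for i using rA by (auto simp: N_def sets_pair_measure)
      have "(LINT z:(\<Union>i. A i)|N. h z) = (\<Sum>i. (LINT z:A i|N. h z))"
      proof (rule lebesgue_integral_countable_add)
        show "A i \<in> sets N" for i by (rule AN)
        show "A i \<inter> A j = {}" if "i \<noteq> j" for i j using disj that by (auto simp: disjoint_family_on_def)
        show "set_integrable N (\<Union>i. A i) h" by (rule si) (use AN inth in \<open>auto simp: N_def\<close>)
      qed
      then show "(LINT z:(\<Union>i. A i)|N. h z) = 0" using IH by simp
    qed
  qed
  have "AE z in N. f z = g z"
  proof (rule density_unique_real)
    show "integrable N f" "integrable N g" using int intg by (auto simp: N_def)
    fix E assume E: "E \<in> sets N"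
    have "(LINT z:E|N. h z) = (LINT z:E|N. f z) - (LINT z:E|N. g z)"
      unfolding h_def by (rule set_integral_diff(2)) (use si[OF E] int intg in \<open>auto simp: N_def\<close>)
    then show "(LINT z:E|N. f z) = (LINT z:E|N. g z)" using all[OF E] by simp
  qed
  then show ?thesis unfolding N_def g_def by simp
qed


lemma closed_dense_all:
  fixes S :: "'p::topological_space set"
  assumes "closure D = UNIV" "closed S" "D \<subseteq> S"
  shows "x \<in> S"
  using closure_minimal[OF assms(3,2)] assms(1) by auto

lemma blinfun_ext:
  fixes u :: "'p::banach \<Rightarrow> real" and D :: "'p set"
  assumes dense: "closure D = UNIV"
   and add: "\<And>x y. x\<in>D \<Longrightarrow> y\<in>D \<Longrightarrow> x+y\<in>D \<and> u (x+y) = u x + u y"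
   and sc: "\<And>q x. x\<in>D \<Longrightarrow> of_rat q *\<^sub>R x \<in> D \<and> u (of_rat q *\<^sub>R x) = of_rat q * u x"
   and bd: "\<And>x. x\<in>D \<Longrightarrow> \<bar>u x\<bar> \<le> C * norm x" and C: "0 \<le> C"
  shows "\<exists>L::'p \<Rightarrow>\<^sub>L real. \<forall>x\<in>D. L x = u x"
proof -
  have diff: "x - y \<in> D \<and> u (x - y) = u x - u y" if "x \<in> D" "y \<in> D" for x y
  proof -
    have "of_rat (-1) *\<^sub>R y \<in> D \<and> u (of_rat (-1) *\<^sub>R y) = of_rat (-1) * u y" using sc[OF that(2)] .
    then have "- y \<in> D" "u (- y) = - u y" by (simp_all add: of_rat_minus)
    then show ?thesis using add[OF that(1), of "-y"] by simp
  qed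
  have uc: "uniformly_continuous_on D u"
    unfolding uniformly_continuous_on_def
  proof (intro allI impI)
    fix e :: real assume e: "e > 0"
    show "\<exists>d>0. \<forall>x\<in>D. \<forall>x'\<in>D. dist x' x < d \<longrightarrow> dist (u x') (u x) < e"
    proof (intro exI[of _ "e / (C + 1)"] conjI ballI impI)
      show "e / (C + 1) > 0" using e C by simp
      fix x x' assume xD: "x \<in> D" and x'D: "x' \<in> D" and d: "dist x' x < e / (C + 1)"
      have "dist (u x') (u x) = \<bar>u (x' - x)\<bar>" using diff[OF x'D xD] by (simp add: dist_real_def)
      also have "\<dots> \<le> C * norm (x' - x)" using bd diff[OF x'D xD] by blast
      also have "\<dots> \<le> C * (e / (C + 1))" using d C by (intro mult_left_mono) (auto simp: dist_norm)
      also have "\<dots> < e" using C e by (simp add: field_simps)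
      finally show "dist (u x') (u x) < e" .
    qed
  qed
  obtain g where gu: "uniformly_continuous_on (closure D) g" and gD: "\<And>x. x \<in> D \<Longrightarrow> u x = g x"
    using uniformly_continuous_on_extension_on_closure[OF uc] by metis
  have cg: "continuous_on UNIV g" using uniformly_continuous_imp_continuous[OF gu] dense by simp
  have cg': "continuous_on S g" for S using cg continuous_on_subset by blast
  have gadd: "g (x + y) = g x + g y" for x y
  proof -
    let ?S = "{p :: 'p \<times> 'p. g (fst p + snd p) = g (fst p) + g (snd p)}"
    have "closed ?S"
      by (intro closed_Collect_eq continuous_intros continuous_on_compose2[OF cg]) auto
    moreover have "D \<times> D \<subseteq> ?S"
    proof clarify
      fix a b assume "a \<in> D" "b \<in> D"
      then show "g (fst (a,b) + snd (a,b)) = g (fst (a,b)) + g (snd (a,b))"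
        using add[of a b] gD[of a] gD[of b] gD[of "a+b"] by simp
    qed
    moreover have "closure (D \<times> D) = UNIV" using dense by (simp add: closure_Times)
    ultimately have "(x, y) \<in> ?S" by (intro closed_dense_all[of "D \<times> D"])
    then show ?thesis by simp
  qed
  have gq: "g (of_rat q *\<^sub>R x) = of_rat q * g x" for q x
  proof -
    let ?S = "{x. g (of_rat q *\<^sub>R x) = of_rat q * g x}"
    have "closed ?S"
      by (intro closed_Collect_eq continuous_intros continuous_on_compose2[OF cg]) auto
    moreover have "D \<subseteq> ?S"
    proof
      fix x assume "x \<in> D" then show "x \<in> ?S" using sc[of x q] gD[of x] gD[of "of_rat q *\<^sub>R x"] by simp
    qed
    ultimately show ?thesis using closed_dense_all[OF dense] by blast
  qed
  have gr: "g (r *\<^sub>R x) = r * g x" for r x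
  proof -
    let ?S = "{r. g (r *\<^sub>R x) = r * g x}"
    have "closed ?S"
      by (intro closed_Collect_eq continuous_intros continuous_on_compose2[OF cg]) auto
    moreover have "\<rat> \<subseteq> ?S" using gq by (auto elim!: Rats_cases)
    ultimately show ?thesis using closed_dense_all[OF Rats_closure_real] by blast
  qed
  have gb: "norm (g x) \<le> norm x * C" for x
  proof -
    let ?S = "{x. \<bar>g x\<bar> \<le> C * norm x}"
    have "closed ?S"
      by (intro closed_Collect_le continuous_intros continuous_on_compose2[OF cg]) auto
    moreover have "D \<subseteq> ?S" using bd gD by auto
    ultimately show ?thesis using closed_dense_all[OF dense] by (auto simp: mult.commute)
  qed
  have bl: "bounded_linear g"
    by (rule bounded_linear_intro[of g C]) (use gadd gr gb in simp_all)
  show ?thesis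
    by (rule exI[of _ "Blinfun g"]) (simp add: bounded_linear_Blinfun_apply[OF bl] gD)
qed

lemma blinfun_eq_dense:
  fixes L1 L2 :: "'p::real_normed_vector \<Rightarrow>\<^sub>L real"
  assumes "closure D = UNIV" "\<And>x. x \<in> D \<Longrightarrow> L1 x = L2 x"
  shows "L1 = L2"
proof (rule blinfun_eqI)
  fix x
  have "closed {x. L1 x = L2 x}" by (intro closed_Collect_eq continuous_intros)
  then show "L1 x = L2 x" using closed_dense_all[OF assms(1), of "{x. L1 x = L2 x}"] assms(2) by blast
qed

lemma exists_Qspan:
  "\<exists>D::'p::{real_normed_vector, second_countable_topology} set. countable D \<and> closure D = UNIV \<and>
     (\<forall>x\<in>D. \<forall>y\<in>D. x+y \<in> D) \<and> (\<forall>q. \<forall>x\<in>D. of_rat q *\<^sub>R x \<in> D)"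
proof -
  obtain E :: "'p set" where E: "countable E" "\<And>X. open X \<Longrightarrow> X \<noteq> {} \<Longrightarrow> \<exists>d\<in>E. d \<in> X"
    using countable_dense_exists by blast
  define sl :: "(rat \<times> 'p) list \<Rightarrow> 'p" where "sl l = sum_list (map (\<lambda>(q,e). of_rat q *\<^sub>R e) l)" for l
  define D where "D = sl ` lists (UNIV \<times> E)"
  have "countable D" unfolding D_def using E(1) by (intro countable_image countable_lists countable_SIGMA) auto
  moreover have "closure D = UNIV"
  proof -
    have "E \<subseteq> D"
    proof
      fix e assume "e \<in> E"
      then have "sl [(1, e)] \<in> D" unfolding D_def by (intro imageI) auto
      then show "e \<in> D" by (simp add: sl_def)
    qed
    moreover have "x \<in> closure E" for x
      unfolding closure_approachable
    proof (intro allI impI)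
      fix r :: real assume "r > 0"
      then obtain d where "d \<in> E" "d \<in> ball x r" using E(2)[of "ball x r"] by auto
      then show "\<exists>y\<in>E. dist y x < r" by (auto simp: dist_commute)
    qed
    ultimately show ?thesis using closure_mono by blast
  qed
  moreover have "\<forall>x\<in>D. \<forall>y\<in>D. x+y \<in> D"
  proof (intro ballI)
    fix x y assume "x \<in> D" "y \<in> D"
    then obtain l1 l2 where "l1 \<in> lists (UNIV \<times> E)" "l2 \<in> lists (UNIV \<times> E)" "x = sl l1" "y = sl l2"
      unfolding D_def by auto
    then show "x + y \<in> D" unfolding D_def
      by (intro image_eqI[of _ _ "l1 @ l2"]) (auto simp: sl_def)
  qed
  moreover have "\<forall>q. \<forall>x\<in>D. of_rat q *\<^sub>R x \<in> D"
  proof (intro allI ballI)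
    fix q x assume "x \<in> D"
    then obtain l where l: "l \<in> lists (UNIV \<times> E)" "x = sl l" unfolding D_def by auto
    have "sl (map (\<lambda>(q',e). (q*q', e)) l) = of_rat q *\<^sub>R sl l"
      by (induction l) (auto simp: sl_def of_rat_mult scaleR_add_right)
    moreover have "map (\<lambda>(q',e). (q*q', e)) l \<in> lists (UNIV \<times> E)" using l(1) by auto
    ultimately show "of_rat q *\<^sub>R x \<in> D" unfolding D_def l(2) by (metis image_eqI)
  qed
  ultimately show ?thesis by blast
qed
lemma pred_ball_countable:
  assumes "countable X" "\<And>i. i \<in> X \<Longrightarrow> Measurable.pred M (\<lambda>x. P x i)"
  shows "Measurable.pred M (\<lambda>x. \<forall>i\<in>X. P x i)"
proof (cases "X = {}")
  case True then show ?thesis by simp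
next
  case False
  have eq: "(\<forall>i\<in>X. P x i) \<longleftrightarrow> (\<forall>n::nat. P x (from_nat_into X n))" for x
    using range_from_nat_into[OF False assms(1)] by (metis rangeI rangeE)
  have "Measurable.pred M (\<lambda>x. \<forall>n::nat. P x (from_nat_into X n))"
    using assms(2) from_nat_into[OF False] by (intro pred_intros_countable) auto
  then show ?thesis unfolding eq .
qed

theorem mainTheorem9:
  fixes M :: "'a measure" and M' :: "'b measure" and M0 :: "'a measure"
    and W :: "'a \<times> 'b \<Rightarrow> ('phi::{banach, second_countable_topology} \<Rightarrow>\<^sub>L real)"
  assumes "prob_space M" and "prob_space M'"
    and "weak_star_measurable (M \<Otimes>\<^sub>M M') W"
    and "integrable (M \<Otimes>\<^sub>M M') (\<lambda>x. (norm (W x))\<^sup>2)"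
    and "subalgebra M M0"
    and "AE y in M'. weak_star_measurable M0 (\<lambda>x. W (x, y))"
  shows "almost_weak_star_measurable (M \<Otimes>\<^sub>M M') (M0 \<Otimes>\<^sub>M M') W"
proof -
  note PM = assms(1) and PM' = assms(2) and wsm = assms(3) and int2 = assms(4)
    and sub = assms(5) and secW = assms(6)
  interpret M: prob_space M by fact
  interpret M': prob_space M' by fact
  interpret P: pair_prob_space M M' by unfold_locales
  define N where "N = M \<Otimes>\<^sub>M M'"
  define F where "F = M0 \<Otimes>\<^sub>M M'"
  have subNF: "subalgebra N F" unfolding N_def F_def by (rule subalg_pair[OF sub])
  have fmeas[measurable]: "(\<lambda>z. W z \<phi>) \<in> borel_measurable N" for \<phi>
    using wsm unfolding weak_star_measurable_def N_def by blast
  have n2meas: "(\<lambda>z. (norm (W z))\<^sup>2) \<in> borel_measurable N" using int2 unfolding N_def by simp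
  have nmeas: "(\<lambda>z. norm (W z)) \<in> borel_measurable N"
  proof -
    have "(\<lambda>z. sqrt ((norm (W z))\<^sup>2)) \<in> borel_measurable N" using n2meas by measurable
    then show ?thesis by simp
  qed
  have intn: "integrable N (\<lambda>z. norm (W z))"
  proof (rule Bochner_Integration.integrable_bound)
    show "integrable N (\<lambda>z. 1 + (norm (W z))\<^sup>2)" using int2 unfolding N_def by simp
    show "(\<lambda>z. norm (W z)) \<in> borel_measurable N" by (rule nmeas)
    show "AE z in N. norm (norm (W z)) \<le> norm (1 + (norm (W z))\<^sup>2)"
    proof (rule AE_I2)
      fix z
      have h0: "0 \<le> (norm (W z) - 1)\<^sup>2" by simp
      have "(norm (W z) - 1)\<^sup>2 = (norm (W z))\<^sup>2 - 2 * norm (W z) + 1" by (simp add: power2_diff)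
      then have "norm (W z) \<le> 1 + (norm (W z))\<^sup>2" using h0 norm_ge_zero[of "W z"] by linarith
      then show "norm (norm (W z)) \<le> norm (1 + (norm (W z))\<^sup>2)" by simp
    qed
  qed
  have intf: "integrable N (\<lambda>z. W z \<phi>)" for \<phi>
  proof (rule Bochner_Integration.integrable_bound)
    show "integrable N (\<lambda>z. norm (W z) * norm \<phi>)" using intn by simp
    show "(\<lambda>z. W z \<phi>) \<in> borel_measurable N" by (rule fmeas)
    show "AE z in N. norm (W z \<phi>) \<le> norm (norm (W z) * norm \<phi>)"
      by (rule AE_I2) (metis norm_blinfun real_norm_def abs_mult abs_norm_cancel)
  qed
  define g where "g \<phi> = real_cond_exp N F (\<lambda>z. W z \<phi>)" for \<phi>
  interpret S: finite_measure_subalgebra N F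
    unfolding N_def F_def by unfold_locales (rule subalg_pair[OF sub])
  have gF[measurable]: "g \<phi> \<in> borel_measurable F" for \<phi> unfolding g_def by simp
  have gAE: "AE z in N. W z \<phi> = g \<phi> z" for \<phi>
  proof -
    have "AE y in M'. (\<lambda>x. W (x,y) \<phi>) \<in> borel_measurable M0"
      using secW by eventually_elim (simp add: weak_star_measurable_def)
    from core[OF PM PM' sub intf[unfolded N_def] this]
    show ?thesis unfolding g_def N_def F_def .
  qed
  obtain D :: "'phi set" where D: "countable D" "closure D = UNIV" "\<forall>x\<in>D. \<forall>y\<in>D. x+y \<in> D"
      "\<forall>q. \<forall>x\<in>D. of_rat q *\<^sub>R x \<in> D"
    using exists_Qspan by blast
  have AEall: "AE z in N. \<forall>\<phi>\<in>D. W z \<phi> = g \<phi> z"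
    using gAE D(1) by (simp add: AE_ball_countable)
  define Gp where "Gp z \<longleftrightarrow> (\<forall>\<phi>\<in>D. \<forall>\<psi>\<in>D. g (\<phi>+\<psi>) z = g \<phi> z + g \<psi> z) \<and>
      (\<forall>q::rat. \<forall>\<phi>\<in>D. g (of_rat q *\<^sub>R \<phi>) z = of_rat q * g \<phi> z) \<and>
      (\<exists>n::nat. \<forall>\<phi>\<in>D. \<bar>g \<phi> z\<bar> \<le> real n * norm \<phi>)" for z
  have Gpred: "Measurable.pred F Gp"
    unfolding Gp_def
    by (intro pred_intros_logic pred_intros_countable pred_ball_countable[OF D(1)]) measurable
  have ext: "\<exists>L::'phi \<Rightarrow>\<^sub>L real. \<forall>\<phi>\<in>D. L \<phi> = g \<phi> z" if "Gp z" for z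
  proof -
    from that obtain n :: nat where n: "\<forall>\<phi>\<in>D. \<bar>g \<phi> z\<bar> \<le> real n * norm \<phi>" unfolding Gp_def by blast
    show ?thesis
    proof (rule blinfun_ext[of D "\<lambda>\<phi>. g \<phi> z" "real n"])
      show "closure D = UNIV" by (rule D(2))
      show "\<And>x y. x\<in>D \<Longrightarrow> y\<in>D \<Longrightarrow> x+y\<in>D \<and> g (x+y) z = g x z + g y z"
        using that D(3) unfolding Gp_def by blast
      show "\<And>q x. x\<in>D \<Longrightarrow> of_rat q *\<^sub>R x \<in> D \<and> g (of_rat q *\<^sub>R x) z = of_rat q * g x z"
        using that D(4) unfolding Gp_def by blast
      show "\<And>x. x\<in>D \<Longrightarrow> \<bar>g x z\<bar> \<le> real n * norm x" using n by blast
    qed simp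
  qed
  define W' where "W' z = (if Gp z then (SOME L::'phi \<Rightarrow>\<^sub>L real. \<forall>\<phi>\<in>D. L \<phi> = g \<phi> z) else 0)" for z
  have W'D: "W' z \<phi> = g \<phi> z" if "Gp z" "\<phi> \<in> D" for z \<phi>
    using someI_ex[OF ext[OF that(1)]] that unfolding W'_def by auto
  have W'meas: "(\<lambda>z. W' z \<psi>) \<in> borel_measurable F" for \<psi>
  proof -
    have "\<psi> \<in> closure D" using D(2) by simp
    then obtain s where s: "\<And>n. s n \<in> D" "s \<longlonglongrightarrow> \<psi>" unfolding closure_sequential by blast
    show ?thesis
    proof (rule borel_measurable_LIMSEQ_real[where u="\<lambda>n z. if Gp z then g (s n) z else 0"])
      fix z
      show "(\<lambda>n. if Gp z then g (s n) z else 0) \<longlonglongrightarrow> W' z \<psi>"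
      proof (cases "Gp z")
        case True
        have "(\<lambda>n. W' z (s n)) \<longlonglongrightarrow> W' z \<psi>" using s(2) by (intro tendsto_intros)
        then show ?thesis using True W'D[OF True s(1)] by simp
      next
        case False then show ?thesis by (simp add: W'_def)
      qed
    next
      fix n
      show "(\<lambda>z. if Gp z then g (s n) z else 0) \<in> borel_measurable F"
        using Gpred unfolding pred_def by (intro measurable_If) auto
    qed
  qed
  have W'measN: "(\<lambda>z. W' z \<psi>) \<in> borel_measurable N" for \<psi>
    by (rule measurable_from_subalg[OF subNF W'meas])
  have AEeq: "AE z in N. W z = W' z"
    using AEall
  proof eventually_elim
    case (elim z)
    have Gz: "Gp z"
      unfolding Gp_def
    proof (intro conjI ballI allI)
      fix \<phi> \<psi> assume "\<phi> \<in> D" "\<psi> \<in> D"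
      then show "g (\<phi>+\<psi>) z = g \<phi> z + g \<psi> z" using elim D(3) by (metis blinfun.add_right)
    next
      fix q \<phi> assume "\<phi> \<in> D"
      then show "g (of_rat q *\<^sub>R \<phi>) z = of_rat q * g \<phi> z" using elim D(4) by (metis blinfun.scaleR_right real_scaleR_def)
    next
      show "\<exists>n::nat. \<forall>\<phi>\<in>D. \<bar>g \<phi> z\<bar> \<le> real n * norm \<phi>"
      proof (intro exI ballI)
        fix \<phi> assume "\<phi> \<in> D"
        have "\<bar>g \<phi> z\<bar> = norm (W z \<phi>)" using elim \<open>\<phi> \<in> D\<close> by simp
        also have "\<dots> \<le> norm (W z) * norm \<phi>" by (rule norm_blinfun)
        also have "\<dots> \<le> real (nat \<lceil>norm (W z)\<rceil>) * norm \<phi>"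
          by (intro mult_right_mono) (auto simp: real_nat_ceiling_ge)
        finally show "\<bar>g \<phi> z\<bar> \<le> real (nat \<lceil>norm (W z)\<rceil>) * norm \<phi>" .
      qed
    qed
    show "W z = W' z"
      by (rule blinfun_eq_dense[OF D(2)]) (use elim W'D[OF Gz] in simp)
  qed
  have intW': "integrable N (\<lambda>z. W' z \<phi>)" for \<phi>
  proof (rule integrable_cong_AE_imp[OF intf W'measN])
    show "AE z in N. W z \<phi> = W' z \<phi>" using AEeq by eventually_elim simp
  qed
  have "is_weak_star_cond_exp N F W W'"
    unfolding is_weak_star_cond_exp_def
  proof (intro conjI ballI allI)
    show "weak_star_measurable F W'" unfolding weak_star_measurable_def using W'meas by blast
    fix B \<phi> assume B: "B \<in> sets F"
    have BN: "B \<in> sets N" using B subNF unfolding subalgebra_def by auto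
    show "set_integrable N B (\<lambda>z. W' z \<phi>)"
      unfolding set_integrable_def by (rule integrable_mult_indicator[OF BN intW'])
    show "set_integrable N B (\<lambda>z. W z \<phi>)"
      unfolding set_integrable_def by (rule integrable_mult_indicator[OF BN intf])
    show "(LINT z:B|N. W' z \<phi>) = (LINT z:B|N. W z \<phi>)"
      unfolding set_lebesgue_integral_def
    proof (rule integral_cong_AE)
      show "(\<lambda>z. indicator B z *\<^sub>R W' z \<phi>) \<in> borel_measurable N" using BN W'measN by measurable
      show "(\<lambda>z. indicator B z *\<^sub>R W z \<phi>) \<in> borel_measurable N" using BN by measurable
      show "AE z in N. indicator B z *\<^sub>R W' z \<phi> = indicator B z *\<^sub>R W z \<phi>"
        using AEeq by eventually_elim simp
    qed
  qed
  then show ?thesis unfolding almost_weak_star_measurable_def N_def F_def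
    using AEeq[unfolded N_def] by blast
qed

end
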